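(* Let $n,d\in\mathbb{N}$. For every entry-wise matrix norm $\|\cdot\|$ on $\mathbb{R}^{n\times n}$, and also for the cut norm $\|\cdot\|_\square$, the function $\widetilde{\delta}^{\mathcal{T}}_{\|\cdot\|}$ is a pseudo-metric on $\mathcal{G}^{\mathbb{B}}_{n,d}$. Additionally, for two vertex-labeled graphs $G,H \in \mathcal{G}^{\mathbb{B}}_{n,d}$, $\widetilde{\delta}^{\mathcal{T}}_{\|\cdot\|}(G,H) = 0$ if and only if $G$ and $H$ are $1$-WL indistinguishable.
   Context: $\mathcal{G}^{\mathbb{B}}_{n,d}$ is the set of labeled graphs $(G,\ell_G)$ with vertex set $V(G)=[n]$ (undirected, no loops) and label function $\ell_G\colon [n]\to\{0,1\}^d$. $\vec{A}(G)\in\{0,1\}^{n\times n}$ is the adjacency matrix. $D_n$ is the set of $n\times n$ doubly-stochastic matrices (nonnegative entries, all row and column sums $1$). Let $\mathrm{dist}$ be a metric on $\{0,1\}^d$ and $\vec{L}(G,H)\in\mathbb{R}^{n\times n}$ the matrix with entries $\vec{L}(G,H)_{ij} = \mathrm{dist}(\ell_G(i),\ell_H(j))$. Define $\widetilde{\delta}^{\mathcal{T}}_{\|\cdot\|}(G,H) = \min_{\vec{S}\in D_n} \|\vec{A}(G)\vec{S} - \vec{S}\vec{A}(H)\| + \mathrm{tr}(\vec{S}^\top \vec{L}(G,H))$. An entry-wise matrix norm is a matrix norm (a norm on $\mathbb{R}^{n\times n}$ with $\|\vec{M}\vec{N}\|\le\|\vec{M}\|\|\vec{N}\|$) defined by applying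 a vector norm on $\mathbb{R}^{n^2}$ to the matrix viewed as a vector. The cut norm is $\|\vec{M}\|_\square = \max_{S,T\subseteq[n]} |\sum_{i\in S,j\in T} m_{ij}|$. A pseudo-metric $\delta$ satisfies $\delta(x,x)=0$, symmetry, and the triangle inequality (nonnegative values). $1$-WL: on a labeled graph, $C_0 = $ labels (injectively encoded as naturals), $C_t(v) = \mathsf{RELABEL}(C_{t-1}(v), \{\!\!\{C_{t-1}(u): u\in N(v)\}\!\!\})$ with $\mathsf{RELABEL}$ injective into fresh naturals; run on $G$ and $H$ in parallel (on the disjoint union). $G$ and $H$ are $1$-WL indistinguishable if for every $t$ the multisets $\{\!\!\{C_t(v): v\in V(G)\}\!\!\}$ and $\{\!\!\{C_t(v): v\in V(H)\}\!\!\}$ coincide. *)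

theory Defs
  imports "HOL-Analysis.Analysis" "HOL-Library.Multiset"
begin

text \<open>Vertices are the elements of a finite type 'n (so V(G) = [n] with n = CARD('n)).
  Labels in {0,1}^d are boolean lists of length d.\<close>

type_synonym 'n lgraph = "('n \<Rightarrow> 'n \<Rightarrow> bool) \<times> ('n \<Rightarrow> bool list)"

definition lgraphs :: "nat \<Rightarrow> ('n::finite) lgraph set" where
  "lgraphs d = {(E, lab). (\<forall>u v. E u v = E v u) \<and> (\<forall>v. \<not> E v v) \<and> (\<forall>v. length (lab v) = d)}"

definition adjm :: "('n::finite) lgraph \<Rightarrow> real^'n^'n" where
  "adjm G = (\<chi> i j. if fst G i j then 1 else 0)"

definition doubly_stochastic :: "real^'n^'n \<Rightarrow> bool" where
  "doubly_stochastic S \<longleftrightarrow> (\<forall>i j. S$i$j \<ge> 0) \<and> (\<forall>i. (\<Sum>j\<in>UNIV. S$i$j) = 1) \<and> (\<forall>j. (\<Sum>i\<in>UNIV. S$i$j) = 1)"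

definition labmat :: "(bool list \<Rightarrow> bool list \<Rightarrow> real) \<Rightarrow> ('n::finite) lgraph \<Rightarrow> 'n lgraph \<Rightarrow> real^'n^'n" where
  "labmat ldist G H = (\<chi> i j. ldist (snd G i) (snd H j))"

text \<open>tr(S^T L) = sum of entrywise products.\<close>
definition trace_TS :: "real^'n^'n \<Rightarrow> real^'n^'n \<Rightarrow> real" where
  "trace_TS S L = (\<Sum>i\<in>UNIV. \<Sum>j\<in>UNIV. S$i$j * L$i$j)"

definition delta_T ::
  "(real^'n^'n \<Rightarrow> real) \<Rightarrow> (bool list \<Rightarrow> bool list \<Rightarrow> real) \<Rightarrow> ('n::finite) lgraph \<Rightarrow> 'n lgraph \<Rightarrow> real" where
  "delta_T N ldist G H = Inf {N (adjm G ** S - S ** adjm H) + trace_TS S (labmat ldist G H) | S. doubly_stochastic S}"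

definition metric_on :: "'a set \<Rightarrow> ('a \<Rightarrow> 'a \<Rightarrow> real) \<Rightarrow> bool" where
  "metric_on X ldist \<longleftrightarrow> (\<forall>x\<in>X. \<forall>y\<in>X. ldist x y \<ge> 0 \<and> (ldist x y = 0 \<longleftrightarrow> x = y) \<and> ldist x y = ldist y x)
     \<and> (\<forall>x\<in>X. \<forall>y\<in>X. \<forall>z\<in>X. ldist x z \<le> ldist x y + ldist y z)"

definition pseudo_metric_on :: "'a set \<Rightarrow> ('a \<Rightarrow> 'a \<Rightarrow> real) \<Rightarrow> bool" where
  "pseudo_metric_on X \<delta> \<longleftrightarrow> (\<forall>x\<in>X. \<delta> x x = 0)
     \<and> (\<forall>x\<in>X. \<forall>y\<in>X. \<delta> x y \<ge> 0 \<and> \<delta> x y = \<delta> y x)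
     \<and> (\<forall>x\<in>X. \<forall>y\<in>X. \<forall>z\<in>X. \<delta> x z \<le> \<delta> x y + \<delta> y z)"

definition matrix_norm :: "(real^'n^'n \<Rightarrow> real) \<Rightarrow> bool" where
  "matrix_norm N \<longleftrightarrow> (\<forall>M. N M \<ge> 0) \<and> (\<forall>M. N M = 0 \<longleftrightarrow> M = 0)
     \<and> (\<forall>c M. N (c *\<^sub>R M) = \<bar>c\<bar> * N M) \<and> (\<forall>M K. N (M + K) \<le> N M + N K)
     \<and> (\<forall>M K. N (M ** K) \<le> N M * N K)"

text \<open>Entry-wise matrix norm: a matrix norm obtained by applying a (symmetric) vector norm
  to the n^2 entries; i.e. its value does not depend on the positions of the entries.\<close>
definition entrywise_matrix_norm :: "(real^('n::finite)^'n \<Rightarrow> real) \<Rightarrow> bool" where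
  "entrywise_matrix_norm N \<longleftrightarrow> matrix_norm N \<and>
     (\<forall>\<sigma> :: 'n \<times> 'n \<Rightarrow> 'n \<times> 'n. \<forall>M. bij \<sigma> \<longrightarrow>
        N (\<chi> i j. M $ fst (\<sigma> (i, j)) $ snd (\<sigma> (i, j))) = N M)"

definition cut_norm :: "real^('n::finite)^'n \<Rightarrow> real" where
  "cut_norm M = Max {\<bar>\<Sum>i\<in>S. \<Sum>j\<in>T. M$i$j\<bar> | S T. S \<subseteq> UNIV \<and> T \<subseteq> UNIV}"

text \<open>1-WL colours. Since RELABEL is injective (and shared between the two graphs, run on
  the disjoint union), colours can be represented by their full unfolding.\<close>
datatype wlcol = Base "bool list" | Step wlcol "wlcol multiset"

fun wl_col :: "('n::finite) lgraph \<Rightarrow> nat \<Rightarrow> 'n \<Rightarrow> wlcol" where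
  "wl_col G 0 v = Base (snd G v)"
| "wl_col G (Suc t) v = Step (wl_col G t v) (image_mset (wl_col G t) (mset_set {u. fst G v u}))"

definition wl_indist :: "('n::finite) lgraph \<Rightarrow> 'n lgraph \<Rightarrow> bool" where
  "wl_indist G H \<longleftrightarrow> (\<forall>t. image_mset (wl_col G t) (mset_set UNIV) = image_mset (wl_col H t) (mset_set UNIV))"

end

theory Submission
  imports Defs
begin


definition trp :: "real^'n^'n \<Rightarrow> real^'n^'n" where
  "trp M = (\<chi> i j. M$j$i)"

lemma trp_nth[simp]: "trp M $ i $ j = M $ j $ i"
  by (simp add: trp_def)

lemma trp_trp[simp]: "trp (trp M) = M"
  by (simp add: vec_eq_iff)

lemma mult_nth: "(A ** B) $ i $ j = (\<Sum>k\<in>UNIV. A$i$k * B$k$j)"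
  by (simp add: matrix_matrix_mult_def)

lemma trp_mult: "trp (A ** B) = trp B ** trp A"
  by (simp add: vec_eq_iff mult_nth mult.commute)

lemma trp_minus: "trp (A - B) = trp A - trp B"
  by (simp add: vec_eq_iff)

lemma trp_uminus: "trp (- A) = - trp A"
  by (simp add: vec_eq_iff)

lemma ds_nonneg: "doubly_stochastic S \<Longrightarrow> 0 \<le> S$i$j"
  by (simp add: doubly_stochastic_def)

lemma ds_row: "doubly_stochastic S \<Longrightarrow> (\<Sum>j\<in>UNIV. S$i$j) = 1"
  by (simp add: doubly_stochastic_def)

lemma ds_col: "doubly_stochastic S \<Longrightarrow> (\<Sum>i\<in>UNIV. S$i$j) = 1"
  by (simp add: doubly_stochastic_def)

lemma ds_le1: "doubly_stochastic S \<Longrightarrow> S$i$j \<le> 1"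
proof -
  assume a: "doubly_stochastic S"
  have "S$i$j \<le> (\<Sum>j\<in>UNIV. S$i$j)"
    by (rule member_le_sum) (auto simp: ds_nonneg[OF a])
  then show ?thesis using ds_row[OF a] by simp
qed

lemma ds_trp: "doubly_stochastic S \<Longrightarrow> doubly_stochastic (trp S)"
  by (simp add: doubly_stochastic_def)

lemma ds_id: "doubly_stochastic (mat 1 :: real^'n^'n)"
  by (simp add: doubly_stochastic_def mat_def)

lemma ds_mult:
  assumes "doubly_stochastic S1" "doubly_stochastic S2"
  shows "doubly_stochastic (S1 ** S2)"
  unfolding doubly_stochastic_def
proof (intro conjI allI)
  fix i j show "0 \<le> (S1 ** S2)$i$j"
    unfolding mult_nth by (intro sum_nonneg mult_nonneg_nonneg ds_nonneg assms)
next
  fix i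
  have "(\<Sum>j\<in>UNIV. (S1 ** S2)$i$j) = (\<Sum>k\<in>UNIV. S1$i$k * (\<Sum>j\<in>UNIV. S2$k$j))"
    unfolding mult_nth sum_distrib_left by (rule sum.swap)
  also have "\<dots> = 1" using ds_row[OF assms(2)] ds_row[OF assms(1)] by simp
  finally show "(\<Sum>j\<in>UNIV. (S1 ** S2)$i$j) = 1" .
next
  fix j
  have "(\<Sum>i\<in>UNIV. (S1 ** S2)$i$j) = (\<Sum>k\<in>UNIV. (\<Sum>i\<in>UNIV. S1$i$k) * S2$k$j)"
    unfolding mult_nth sum_distrib_right by (rule sum.swap)
  also have "\<dots> = 1" using ds_col[OF assms(2)] ds_col[OF assms(1)] by simp
  finally show "(\<Sum>i\<in>UNIV. (S1 ** S2)$i$j) = 1" .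
qed

lemma real_card_sum: "real (card {x\<in>A. P x}) = (\<Sum>x\<in>A. if P x then 1 else 0)" if "finite A"
  using that by (simp add: sum.If_cases Int_def)


lemma hall:
  fixes A :: "'a \<Rightarrow> 'b set"
  assumes "finite I" "\<forall>i\<in>I. finite (A i)" "\<forall>K\<subseteq>I. card K \<le> card (\<Union>(A ` K))"
  shows "\<exists>f. inj_on f I \<and> (\<forall>i\<in>I. f i \<in> A i)"
  using assms
proof (induction "card I" arbitrary: I A rule: less_induct)
  case less
  show ?case
  proof (cases "I = {}")
    case True then show ?thesis by auto
  next
    case False
    show ?thesis
    proof (cases "\<exists>K. K \<subseteq> I \<and> K \<noteq> {} \<and> K \<noteq> I \<and> card K = card (\<Union>(A ` K))")
      case True
      then obtain K where K: "K \<subseteq> I" "K \<noteq> {}" "K \<noteq> I" "card K = card (\<Union>(A ` K))" by blast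
      define U where "U = \<Union>(A ` K)"
      have fK: "finite K" using K(1) less.prems(1) finite_subset by blast
      have cK: "card K < card I" using K(1,3) less.prems(1) by (meson psubsetI psubset_card_mono)
      have hK: "\<forall>L\<subseteq>K. card L \<le> card (\<Union>(A ` L))" using less.prems(3) K(1) by auto
      obtain g where g: "inj_on g K" "\<forall>i\<in>K. g i \<in> A i"
        using less.hyps[OF cK fK _ hK] less.prems(2) K(1) by auto
      define J where "J = I - K"
      define B where "B i = A i - U" for i
      have cKpos: "card K > 0" using fK K(2) by auto
      have cJ: "card J < card I" unfolding J_def using K(1) less.prems(1) cKpos cK
        by (simp add: card_Diff_subset fK)
      have fU: "finite U" using fK K(1) less.prems(2) by (auto simp: U_def)
      have hallJ: "\<forall>L\<subseteq>J. card L \<le> card (\<Union>(B ` L))"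
      proof (intro allI impI)
        fix L assume L: "L \<subseteq> J"
        have fL: "finite L" using L less.prems(1) finite_subset unfolding J_def by blast
        have eq: "\<Union>(A ` (L \<union> K)) = \<Union>(B ` L) \<union> U" by (auto simp: B_def U_def)
        have disj: "\<Union>(B ` L) \<inter> U = {}" by (auto simp: B_def)
        have fB: "finite (\<Union>(B ` L))" using fL less.prems(2) L by (auto simp: B_def J_def)
        have "L \<union> K \<subseteq> I" using L K(1) by (auto simp: J_def)
        then have "card (L \<union> K) \<le> card (\<Union>(A ` (L \<union> K)))" using less.prems(3) by blast
        also have "\<dots> = card (\<Union>(B ` L)) + card U" unfolding eq using card_Un_disjoint[OF fB fU disj] .
        finally have "card (L \<union> K) \<le> card (\<Union>(B ` L)) + card U" .
        moreover have "card (L \<union> K) = card L + card K"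
          using card_Un_disjoint[OF fL fK] L by (auto simp: J_def)
        ultimately show "card L \<le> card (\<Union>(B ` L))" using K(4) unfolding U_def by linarith
      qed
      have fJ: "finite J" using less.prems(1) by (simp add: J_def)
      obtain h where h: "inj_on h J" "\<forall>i\<in>J. h i \<in> B i"
        using less.hyps[OF cJ fJ _ hallJ] less.prems(2) by (auto simp: B_def J_def)
      define f where "f i = (if i \<in> K then g i else h i)" for i
      have "inj_on f I"
      proof (rule inj_onI)
        fix x y assume xy: "x \<in> I" "y \<in> I" "f x = f y"
        show "x = y"
        proof (cases "x \<in> K"; cases "y \<in> K")
          assume "x \<in> K" "y \<in> K" then show ?thesis using xy g(1) by (auto simp: f_def inj_on_def)
        next
          assume "x \<notin> K" "y \<notin> K" then show ?thesis using xy h(1) by (auto simp: f_def inj_on_def J_def)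
        next
          assume a: "x \<in> K" "y \<notin> K"
          then have "f x \<in> U" using g(2) by (auto simp: f_def U_def)
          moreover have "f y \<notin> U" using a h(2) xy(2) by (auto simp: f_def B_def J_def)
          ultimately show ?thesis using xy by simp
        next
          assume a: "x \<notin> K" "y \<in> K"
          then have "f y \<in> U" using g(2) by (auto simp: f_def U_def)
          moreover have "f x \<notin> U" using a h(2) xy(1) by (auto simp: f_def B_def J_def)
          ultimately show ?thesis using xy by simp
        qed
      qed
      moreover have "\<forall>i\<in>I. f i \<in> A i" using g h by (auto simp: f_def B_def J_def)
      ultimately show ?thesis by blast
    next
      case False
      have strict: "\<And>K. K \<subseteq> I \<Longrightarrow> K \<noteq> {} \<Longrightarrow> K \<noteq> I \<Longrightarrow> card K < card (\<Union>(A ` K))"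
        using False less.prems(3) by (metis le_less)
      obtain i0 where i0: "i0 \<in> I" using \<open>I \<noteq> {}\<close> by blast
      have "card {i0} \<le> card (A i0)" using less.prems(3) i0 by (metis empty_subsetI image_empty
            image_insert insert_subset cSup_singleton)
      hence "A i0 \<noteq> {}" by auto
      then obtain b where b: "b \<in> A i0" by blast
      define J where "J = I - {i0}"
      define B where "B i = A i - {b}" for i
      have cJ: "card J < card I" using i0 less.prems(1) unfolding J_def by (meson card_Diff1_less)
      have hallJ: "\<forall>L\<subseteq>J. card L \<le> card (\<Union>(B ` L))"
      proof (intro allI impI)
        fix L assume L: "L \<subseteq> J"
        show "card L \<le> card (\<Union>(B ` L))"
        proof (cases "L = {}")
          case True then show ?thesis by simp
        next
          case False
          have fL: "finite L" using L less.prems(1) finite_subset unfolding J_def by blast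
          have "L \<noteq> I" using L i0 by (auto simp: J_def)
          hence lt: "card L < card (\<Union>(A ` L))" using strict L False by (auto simp: J_def)
          have eq: "\<Union>(B ` L) = \<Union>(A ` L) - {b}" by (auto simp: B_def)
          have "finite (\<Union>(A ` L))" using fL less.prems(2) L by (auto simp: J_def)
          then show ?thesis unfolding eq using lt by (simp add: card_Diff_singleton_if) linarith
        qed
      qed
      have fJ: "finite J" using less.prems(1) by (simp add: J_def)
      obtain h where h: "inj_on h J" "\<forall>i\<in>J. h i \<in> B i"
        using less.hyps[OF cJ fJ _ hallJ] less.prems(2) by (auto simp: B_def J_def)
      define f where "f = h(i0 := b)"
      have "inj_on f I"
      proof (rule inj_onI)
        fix x y assume xy: "x \<in> I" "y \<in> I" "f x = f y"
        show "x = y"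
          using xy h i0 by (auto simp: f_def inj_on_def J_def B_def split: if_splits)
      qed
      moreover have "\<forall>i\<in>I. f i \<in> A i" using h b by (auto simp: f_def B_def J_def)
      ultimately show ?thesis by blast
    qed
  qed
qed


definition pmat :: "('n::finite \<Rightarrow> 'n) \<Rightarrow> real^'n^'n" where
  "pmat f = (\<chi> i j. if f i = j then 1 else 0)"

lemma mult_pmat: "bij f \<Longrightarrow> M ** pmat f = (\<chi> i j. M $ i $ inv f j)"
proof -
  assume b: "bij f"
  have e: "\<And>k j. (f k = j) = (k = inv f j)" using b by (metis bij_inv_eq_iff)
  show ?thesis
    by (simp add: vec_eq_iff mult_nth pmat_def e if_distrib cong: if_cong)
qed

lemma mult_scale_right: "M ** (c *\<^sub>R P) = c *\<^sub>R (M ** (P::real^'n^'n))"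
  by (simp add: vec_eq_iff mult_nth sum_distrib_left mult.left_commute)

lemma perm_bound:
  fixes N :: "real^'n::finite^'n \<Rightarrow> real"
  assumes sub: "\<And>M K. N (M+K) \<le> N M + N K"
    and hom: "\<And>c M. N (c *\<^sub>R M) = \<bar>c\<bar> * N M"
    and perm: "\<And>M f. bij f \<Longrightarrow> N (M ** pmat f) = N M"
    and z: "N 0 = 0"
  shows "(\<forall>i j. 0 \<le> S$i$j) \<Longrightarrow> (\<forall>i. (\<Sum>j\<in>UNIV. S$i$j) = s) \<Longrightarrow> (\<forall>j. (\<Sum>i\<in>UNIV. S$i$j) = s)
     \<Longrightarrow> N (M ** S) \<le> s * N M"
proof (induction "card {p. S $ fst p $ snd p \<noteq> 0}" arbitrary: S s rule: less_induct)
  case less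
  note nn = less.prems(1) and rs = less.prems(2) and cs = less.prems(3)
  have s0: "0 \<le> s" using rs nn by (metis sum_nonneg)
  show ?case
  proof (cases "s = 0")
    case True
    have "\<forall>i j. S$i$j = 0"
    proof (intro allI)
      fix i j
      have "(\<Sum>j\<in>UNIV. S$i$j) = 0" using rs True by simp
      then show "S$i$j = 0" using nn by (simp add: sum_nonneg_eq_0_iff)
    qed
    then have "S = 0" by (simp add: vec_eq_iff)
    then have "M ** S = 0" by (simp add: vec_eq_iff mult_nth)
    then show ?thesis using z True by simp
  next
    case False
    with s0 have spos: "0 < s" by simp
    define A where "A i = {j. 0 < S$i$j}" for i
    have hallc: "\<forall>K\<subseteq>(UNIV::'n set). card K \<le> card (\<Union>(A ` K))"
    proof (intro allI impI)
      fix K :: "'n set"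
      define U where "U = \<Union>(A ` K)"
      have "real (card K) * s = (\<Sum>i\<in>K. \<Sum>j\<in>UNIV. S$i$j)" using rs by simp
      also have "\<dots> = (\<Sum>i\<in>K. \<Sum>j\<in>U. S$i$j)"
      proof (rule sum.cong[OF refl])
        fix i assume i: "i \<in> K"
        show "(\<Sum>j\<in>UNIV. S$i$j) = (\<Sum>j\<in>U. S$i$j)"
        proof (rule sum.mono_neutral_right)
          show "\<forall>j\<in>UNIV - U. S$i$j = 0"
          proof
            fix j assume "j \<in> UNIV - U"
            then have "\<not> 0 < S$i$j" using i by (auto simp: U_def A_def)
            then show "S$i$j = 0" using nn[rule_format, of i j] by linarith
          qed
        qed auto
      qed
      also have "\<dots> = (\<Sum>j\<in>U. \<Sum>i\<in>K. S$i$j)" by (rule sum.swap)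
      also have "\<dots> \<le> (\<Sum>j\<in>U. \<Sum>i\<in>UNIV. S$i$j)"
        by (intro sum_mono sum_mono2) (auto simp: nn)
      also have "\<dots> = real (card U) * s" using cs by simp
      finally have "real (card K) * s \<le> real (card U) * s" .
      then show "card K \<le> card (\<Union>(A ` K))" using spos unfolding U_def by simp
    qed
    obtain f where f: "inj_on f UNIV" "\<forall>i. f i \<in> A i"
      using hall[of "UNIV::'n set" A] hallc by auto
    have bf: "bij f" using f(1) by (simp add: bij_def finite_UNIV_inj_surj)
    define lam where "lam = Min (range (\<lambda>i. S$i$(f i)))"
    have "lam \<in> range (\<lambda>i. S$i$(f i))" unfolding lam_def by (rule Min_in) auto
    then obtain i0 where i0: "lam = S$i0$(f i0)" by auto
    have lampos: "0 < lam" using f(2) i0 by (simp add: A_def)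
    have lamle: "\<And>i. lam \<le> S$i$(f i)" unfolding lam_def by simp
    define S' where "S' = S - lam *\<^sub>R pmat f"
    have S'n: "S'$i$j = (if f i = j then S$i$j - lam else S$i$j)" for i j
      by (simp add: S'_def pmat_def)
    have nn': "\<forall>i j. 0 \<le> S'$i$j" using nn lamle by (auto simp: S'n)
    have rs': "\<forall>i. (\<Sum>j\<in>UNIV. S'$i$j) = s - lam"
    proof
      fix i
      have "(\<Sum>j\<in>UNIV. S'$i$j) = (\<Sum>j\<in>UNIV. S$i$j) - (\<Sum>j\<in>UNIV. lam * (if f i = j then 1 else 0))"
        by (simp add: S'_def pmat_def sum_subtractf)
      also have "\<dots> = s - lam" using rs by (simp add: if_distrib cong: if_cong)
      finally show "(\<Sum>j\<in>UNIV. S'$i$j) = s - lam" .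
    qed
    have cs': "\<forall>j. (\<Sum>i\<in>UNIV. S'$i$j) = s - lam"
    proof
      fix j
      have e: "\<And>k. (f k = j) = (k = inv f j)" using bf by (metis bij_inv_eq_iff)
      have "(\<Sum>i\<in>UNIV. S'$i$j) = (\<Sum>i\<in>UNIV. S$i$j) - (\<Sum>i\<in>UNIV. lam * (if f i = j then 1 else 0))"
        by (simp add: S'_def pmat_def sum_subtractf)
      also have "\<dots> = s - lam" using cs by (simp add: e if_distrib cong: if_cong)
      finally show "(\<Sum>i\<in>UNIV. S'$i$j) = s - lam" .
    qed
    have sub_supp: "{p. S' $ fst p $ snd p \<noteq> 0} \<subset> {p. S $ fst p $ snd p \<noteq> 0}"
    proof
      show "{p. S' $ fst p $ snd p \<noteq> 0} \<subseteq> {p. S $ fst p $ snd p \<noteq> 0}"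
        using f(2) by (auto simp: S'n A_def split: if_splits) (metis less_irrefl)
      have "(i0, f i0) \<in> {p. S $ fst p $ snd p \<noteq> 0}" using lampos i0 by simp
      moreover have "(i0, f i0) \<notin> {p. S' $ fst p $ snd p \<noteq> 0}" using i0 by (simp add: S'n)
      ultimately show "{p. S' $ fst p $ snd p \<noteq> 0} \<noteq> {p. S $ fst p $ snd p \<noteq> 0}" by blast
    qed
    have lt: "card {p. S' $ fst p $ snd p \<noteq> 0} < card {p. S $ fst p $ snd p \<noteq> 0}"
      by (rule psubset_card_mono[OF _ sub_supp]) simp
    have IH: "N (M ** S') \<le> (s - lam) * N M"
      using less.hyps[OF lt nn' rs' cs'] .
    have "S = S' + lam *\<^sub>R pmat f" by (simp add: S'_def)
    then have "M ** S = M ** S' + lam *\<^sub>R (M ** pmat f)"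
      by (simp add: matrix_add_ldistrib mult_scale_right)
    then have "N (M ** S) \<le> N (M ** S') + lam * N M"
      using sub hom perm[OF bf] lampos by (metis abs_of_pos)
    then show ?thesis using IH by (simp add: algebra_simps)
  qed
qed


definition gnorm :: "(real^'n^'n \<Rightarrow> real) \<Rightarrow> bool" where
  "gnorm N \<longleftrightarrow> (\<forall>M. 0 \<le> N M) \<and> (\<forall>M. N M = 0 \<longleftrightarrow> M = 0) \<and> (\<forall>M K. N (M + K) \<le> N M + N K)
    \<and> (\<forall>M. N (- M) = N M) \<and> (\<forall>M. N (trp M) = N M)
    \<and> (\<forall>M S. doubly_stochastic S \<longrightarrow> N (M ** S) \<le> N M)
    \<and> (\<exists>C\<ge>0. \<forall>M. N M \<le> C * (\<Sum>i\<in>UNIV. \<Sum>j\<in>UNIV. \<bar>M$i$j\<bar>))"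

lemma gnorm_left:
  assumes "gnorm N" "doubly_stochastic S"
  shows "N (S ** M) \<le> N M"
proof -
  have "N (S ** M) = N (trp (S ** M))" using assms(1) by (simp add: gnorm_def)
  also have "\<dots> = N (trp M ** trp S)" by (simp add: trp_mult)
  also have "\<dots> \<le> N (trp M)" using assms(1) ds_trp[OF assms(2)] unfolding gnorm_def by blast
  also have "\<dots> = N M" using assms(1) by (simp add: gnorm_def)
  finally show ?thesis .
qed

lemma abs_entry_le_norm: "\<bar>M$i$j\<bar> \<le> norm (M::real^'n^'n)"
proof -
  have "\<bar>M$i$j\<bar> \<le> norm (M$i)" by (rule component_le_norm_cart)
  also have "\<dots> \<le> norm M" by (rule Finite_Cartesian_Product.norm_nth_le)
  finally show ?thesis .
qed

lemma gnorm_cont: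
  fixes N :: "real^'n::finite^'n \<Rightarrow> real"
  assumes "gnorm N"
  shows "continuous_on UNIV N"
proof -
  obtain C where C: "C \<ge> 0" "\<And>M. N M \<le> C * (\<Sum>i\<in>UNIV. \<Sum>j\<in>UNIV. \<bar>M$i$j\<bar>)"
    using assms by (auto simp: gnorm_def)
  have tri: "\<And>M K. N (M + K) \<le> N M + N K" and ng: "\<And>M. N (- M) = N M"
    using assms by (auto simp: gnorm_def)
  define L where "L = C * real (CARD('n) * CARD('n))"
  have bnd: "N M \<le> L * norm M" for M
  proof -
    have "(\<Sum>i\<in>UNIV. \<Sum>j\<in>UNIV. \<bar>M$i$j\<bar>) \<le> (\<Sum>i\<in>(UNIV::'n set). \<Sum>j\<in>(UNIV::'n set). norm M)"
      by (intro sum_mono abs_entry_le_norm)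
    also have "\<dots> = real (CARD('n) * CARD('n)) * norm M" by simp
    finally have "(\<Sum>i\<in>UNIV. \<Sum>j\<in>UNIV. \<bar>M$i$j\<bar>) \<le> real (CARD('n) * CARD('n)) * norm M" .
    then have "C * (\<Sum>i\<in>UNIV. \<Sum>j\<in>UNIV. \<bar>M$i$j\<bar>) \<le> C * (real (CARD('n) * CARD('n)) * norm M)"
      by (rule mult_left_mono) (rule C(1))
    then show ?thesis using C(2)[of M] unfolding L_def by (simp add: mult.assoc)
  qed
  have "L-lipschitz_on UNIV N"
  proof (rule lipschitz_onI)
    show "0 \<le> L" using C by (simp add: L_def)
    fix x y :: "real^'n^'n"
    have "N x \<le> N (x - y) + N y" using tri[of "x - y" y] by simp
    moreover have "N y \<le> N (y - x) + N x" using tri[of "y - x" x] by simp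
    moreover have "N (y - x) = N (x - y)" using ng[of "x - y"] by simp
    moreover have "N (x - y) \<le> L * norm (x - y)" by (rule bnd)
    ultimately show "dist (N x) (N y) \<le> L * dist x y"
      by (simp add: dist_real_def dist_norm abs_le_iff)
  qed
  then show ?thesis by (rule lipschitz_on_continuous_on)
qed


lemma N_sum:
  fixes N :: "'a::comm_monoid_add \<Rightarrow> real"
  assumes z: "N 0 = 0" and tri: "\<And>M K. N (M + K) \<le> N M + N K"
  shows "finite A \<Longrightarrow> N (\<Sum>x\<in>A. f x) \<le> (\<Sum>x\<in>A. N (f x))"
proof (induction A rule: finite_induct)
  case empty then show ?case using z by simp
next
  case (insert x F)
  then show ?case using tri[of "f x" "sum f F"] by simp
qed

definition emat :: "'n::finite \<Rightarrow> 'n \<Rightarrow> real^'n^'n" where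
  "emat i j = (\<chi> a b. if a = i \<and> b = j then 1 else 0)"

lemma sum_delta2: "(\<Sum>x\<in>UNIV. \<Sum>y\<in>UNIV. if i = x \<and> j = y then g x y else (0::real)) = g (i::'n::finite) (j::'m::finite)"
proof -
  have "\<And>x. (\<Sum>y\<in>UNIV. if i = x \<and> j = y then g x y else (0::real)) = (if i = x then g x j else 0)"
    by (case_tac "i = x") auto
  then show ?thesis by simp
qed

lemma mat_decomp: "M = (\<Sum>i\<in>UNIV. \<Sum>j\<in>UNIV. M$i$j *\<^sub>R emat i j)"
  by (simp add: vec_eq_iff sum_component emat_def if_distrib sum_delta2 cong: if_cong)

lemma entrywise_gnorm:
  fixes N :: "real^'n::finite^'n \<Rightarrow> real"
  assumes "entrywise_matrix_norm N"
  shows "gnorm N"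
proof -
  have nn: "\<And>M. 0 \<le> N M" and zz: "\<And>M. N M = 0 \<longleftrightarrow> M = 0"
    and hom: "\<And>c M. N (c *\<^sub>R M) = \<bar>c\<bar> * N M" and tri: "\<And>M K. N (M + K) \<le> N M + N K"
    and perm: "\<And>\<sigma> M. bij (\<sigma> :: 'n \<times> 'n \<Rightarrow> 'n \<times> 'n) \<Longrightarrow>
        N (\<chi> i j. M $ fst (\<sigma> (i, j)) $ snd (\<sigma> (i, j))) = N M"
    using assms unfolding entrywise_matrix_norm_def matrix_norm_def by blast+
  have z: "N 0 = 0" using zz by simp
  have neg: "N (- M) = N M" for M using hom[of "-1" M] by simp
  have tr: "N (trp M) = N M" for M
  proof -
    have b: "bij (prod.swap :: 'n \<times> 'n \<Rightarrow> 'n \<times> 'n)" by (rule bij_swap)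
    have "(\<chi> i j. M $ fst (prod.swap (i, j)) $ snd (prod.swap (i, j))) = trp M"
      by (simp add: vec_eq_iff)
    then show ?thesis using perm[OF b, of M] by simp
  qed
  have pm: "N (M ** pmat f) = N M" if bf: "bij f" for M f
  proof -
    define \<sigma> where "\<sigma> = (\<lambda>(i::'n, j::'n). (i, inv f j))"
    have "bij \<sigma>"
    proof (rule o_bij)
      show "\<sigma> \<circ> (\<lambda>(i, j). (i, f j)) = id" using bf
        by (auto simp: \<sigma>_def fun_eq_iff bij_def inv_f_f)
      show "(\<lambda>(i, j). (i, f j)) \<circ> \<sigma> = id" using bf
        by (auto simp: \<sigma>_def fun_eq_iff bij_def surj_f_inv_f)
    qed
    moreover have "(\<chi> i j. M $ fst (\<sigma> (i, j)) $ snd (\<sigma> (i, j))) = M ** pmat f"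
      by (simp add: \<sigma>_def mult_pmat[OF bf])
    ultimately show ?thesis using perm[of \<sigma> M] by simp
  qed
  have ds: "N (M ** S) \<le> N M" if "doubly_stochastic S" for M S
    using perm_bound[of N S 1 M, OF tri hom pm z] that
    by (simp add: doubly_stochastic_def)
  define C where "C = (\<Sum>i\<in>UNIV. \<Sum>j\<in>UNIV. N (emat i j))"
  have C0: "C \<ge> 0" unfolding C_def by (intro sum_nonneg nn)
  have bnd: "N M \<le> C * (\<Sum>i\<in>UNIV. \<Sum>j\<in>UNIV. \<bar>M$i$j\<bar>)" for M
  proof -
    define T where "T = (\<Sum>i\<in>UNIV. \<Sum>j\<in>UNIV. \<bar>M$i$j\<bar>)"
    have le: "\<bar>M$i$j\<bar> \<le> T" for i j
    proof -
      have "\<bar>M$i$j\<bar> \<le> (\<Sum>j\<in>UNIV. \<bar>M$i$j\<bar>)" by (rule member_le_sum) auto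
      also have "\<dots> \<le> T" unfolding T_def by (rule member_le_sum[where f = "\<lambda>i. \<Sum>j\<in>UNIV. \<bar>M$i$j\<bar>"]) (auto intro: sum_nonneg)
      finally show ?thesis .
    qed
    have "N M = N (\<Sum>i\<in>UNIV. \<Sum>j\<in>UNIV. M$i$j *\<^sub>R emat i j)" using mat_decomp[of M] by simp
    also have "\<dots> \<le> (\<Sum>i\<in>UNIV. N (\<Sum>j\<in>UNIV. M$i$j *\<^sub>R emat i j))" by (rule N_sum[OF z tri]) simp
    also have "\<dots> \<le> (\<Sum>i\<in>UNIV. \<Sum>j\<in>UNIV. N (M$i$j *\<^sub>R emat i j))"
      by (intro sum_mono N_sum[OF z tri]) simp
    also have "\<dots> = (\<Sum>i\<in>UNIV. \<Sum>j\<in>UNIV. \<bar>M$i$j\<bar> * N (emat i j))" by (simp add: hom)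
    also have "\<dots> \<le> (\<Sum>i\<in>UNIV. \<Sum>j\<in>UNIV. T * N (emat i j))"
      by (intro sum_mono mult_right_mono le nn)
    also have "\<dots> = C * T" by (simp add: C_def sum_distrib_left mult.commute)
    finally show ?thesis by (simp add: T_def mult.commute)
  qed
  show ?thesis unfolding gnorm_def using nn zz tri neg tr ds C0 bnd by blast
qed


definition cterm :: "real^'n^'n \<Rightarrow> 'n set \<Rightarrow> 'n set \<Rightarrow> real" where
  "cterm M A B = \<bar>\<Sum>i\<in>A. \<Sum>j\<in>B. M$i$j\<bar>"

lemma cut_eq: "cut_norm M = Max ((\<lambda>(A, B). cterm M A B) ` UNIV)"
  unfolding cut_norm_def cterm_def by (rule arg_cong[where f = Max]) auto

lemma cut_ge: "cterm M A B \<le> cut_norm (M::real^'n::finite^'n)"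
  unfolding cut_eq by (rule Max_ge) auto

lemma cut_le: "(\<And>A B. cterm M A B \<le> c) \<Longrightarrow> cut_norm (M::real^'n::finite^'n) \<le> c"
  unfolding cut_eq by (subst Max_le_iff) auto

lemma lin_box_upper:
  fixes c x :: "'n::finite \<Rightarrow> real"
  assumes "\<And>k. 0 \<le> x k" "\<And>k. x k \<le> 1"
  shows "(\<Sum>k\<in>UNIV. c k * x k) \<le> (\<Sum>k\<in>{k. 0 < c k}. c k)"
proof -
  have "(\<Sum>k\<in>UNIV. c k * x k) \<le> (\<Sum>k\<in>UNIV. if 0 < c k then c k else 0)"
  proof (rule sum_mono)
    fix k
    show "c k * x k \<le> (if 0 < c k then c k else 0)"
    proof (cases "0 < c k")
      case True then show ?thesis using assms[of k] by (simp add: mult_left_le)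
    next
      case False then show ?thesis using assms[of k] by (simp add: mult_nonpos_nonneg)
    qed
  qed
  also have "\<dots> = (\<Sum>k\<in>{k. 0 < c k}. c k)" by (simp add: sum.If_cases Int_def)
  finally show ?thesis .
qed

lemma cut_gnorm: "gnorm (cut_norm :: real^'n::finite^'n \<Rightarrow> real)"
proof -
  have nn: "0 \<le> cut_norm M" for M :: "real^'n^'n"
    using cut_ge[of M "{}" "{}"] by (simp add: cterm_def)
  have zz: "cut_norm M = 0 \<longleftrightarrow> M = 0" for M :: "real^'n^'n"
  proof
    assume a: "cut_norm M = 0"
    have "M$i$j = 0" for i j using cut_ge[of M "{i}" "{j}"] a by (simp add: cterm_def)
    then show "M = 0" by (simp add: vec_eq_iff)
  next
    assume "M = 0"
    then have "cut_norm M \<le> 0" by (intro cut_le) (simp add: cterm_def)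
    then show "cut_norm M = 0" using nn[of M] by simp
  qed
  have tri: "cut_norm (M + K) \<le> cut_norm M + cut_norm K" for M K :: "real^'n^'n"
  proof (rule cut_le)
    fix A B
    have "cterm (M + K) A B \<le> cterm M A B + cterm K A B"
      by (simp add: cterm_def sum.distrib abs_triangle_ineq)
    then show "cterm (M + K) A B \<le> cut_norm M + cut_norm K"
      using cut_ge[of M A B] cut_ge[of K A B] by linarith
  qed
  have neg1: "cut_norm (- M) \<le> cut_norm M" for M :: "real^'n^'n"
  proof (rule cut_le)
    fix A B
    have "cterm (- M) A B = cterm M A B" by (simp add: cterm_def sum_negf)
    then show "cterm (- M) A B \<le> cut_norm M" using cut_ge[of M A B] by simp
  qed
  have neg: "cut_norm (- M) = cut_norm M" for M :: "real^'n^'n"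
    using neg1[of M] neg1[of "- M"] by simp
  have tr1: "cut_norm (trp M) \<le> cut_norm M" for M :: "real^'n^'n"
  proof (rule cut_le)
    fix A B
    have "cterm (trp M) A B = cterm M B A" unfolding cterm_def by (simp add: sum.swap[of _ A])
    then show "cterm (trp M) A B \<le> cut_norm M" using cut_ge[of M B A] by simp
  qed
  have tr: "cut_norm (trp M) = cut_norm M" for M :: "real^'n^'n"
    using tr1[of M] tr1[of "trp M"] by simp
  have ds: "cut_norm (M ** S) \<le> cut_norm M" if S: "doubly_stochastic S" for M S :: "real^'n^'n"
  proof (rule cut_le)
    fix A B
    define c where "c k = (\<Sum>i\<in>A. M$i$k)" for k
    define x where "x k = (\<Sum>j\<in>B. S$k$j)" for k
    have x0: "0 \<le> x k" for k unfolding x_def by (intro sum_nonneg ds_nonneg S)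
    have x1: "x k \<le> 1" for k
    proof -
      have "x k \<le> (\<Sum>j\<in>UNIV. S$k$j)" unfolding x_def by (rule sum_mono2) (auto intro: ds_nonneg S)
      then show ?thesis using ds_row[OF S] by simp
    qed
    have eq: "(\<Sum>i\<in>A. \<Sum>j\<in>B. (M ** S)$i$j) = (\<Sum>k\<in>UNIV. c k * x k)"
    proof -
      have "(\<Sum>i\<in>A. \<Sum>j\<in>B. (M ** S)$i$j) = (\<Sum>i\<in>A. \<Sum>k\<in>UNIV. M$i$k * x k)"
        unfolding mult_nth x_def sum_distrib_left by (intro sum.cong refl sum.swap)
      also have "\<dots> = (\<Sum>k\<in>UNIV. c k * x k)"
        unfolding c_def sum_distrib_right by (rule sum.swap)
      finally show ?thesis .
    qed
    have up: "(\<Sum>k\<in>UNIV. c k * x k) \<le> (\<Sum>k\<in>{k. 0 < c k}. c k)"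
      by (rule lin_box_upper) (auto intro: x0 x1)
    have lo: "(\<Sum>k\<in>UNIV. (- c k) * x k) \<le> (\<Sum>k\<in>{k. 0 < - c k}. - c k)"
      by (rule lin_box_upper) (auto intro: x0 x1)
    have c1: "(\<Sum>k\<in>{k. 0 < c k}. c k) \<le> cut_norm M"
    proof -
      have "(\<Sum>k\<in>{k. 0 < c k}. c k) = (\<Sum>i\<in>A. \<Sum>k\<in>{k. 0 < c k}. M$i$k)"
        unfolding c_def by (rule sum.swap)
      also have "\<dots> \<le> cterm M A {k. 0 < c k}" unfolding cterm_def by simp
      finally show ?thesis using cut_ge[of M A "{k. 0 < c k}"] by linarith
    qed
    have c2: "(\<Sum>k\<in>{k. 0 < - c k}. - c k) \<le> cut_norm M"
    proof -
      have "(\<Sum>k\<in>{k. 0 < - c k}. - c k) = - (\<Sum>i\<in>A. \<Sum>k\<in>{k. 0 < - c k}. M$i$k)"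
        unfolding c_def sum_negf by (simp add: sum.swap[of _ A])
      also have "\<dots> \<le> cterm M A {k. 0 < - c k}" unfolding cterm_def by simp
      finally show ?thesis using cut_ge[of M A "{k. 0 < - c k}"] by linarith
    qed
    have "(\<Sum>k\<in>UNIV. (- c k) * x k) = - (\<Sum>k\<in>UNIV. c k * x k)" by (simp add: sum_negf)
    then show "cterm (M ** S) A B \<le> cut_norm M"
      unfolding cterm_def eq using up lo c1 c2 by linarith
  qed
  have bnd: "cut_norm M \<le> 1 * (\<Sum>i\<in>UNIV. \<Sum>j\<in>UNIV. \<bar>M$i$j\<bar>)" for M :: "real^'n^'n"
  proof (rule cut_le)
    fix A B
    have "cterm M A B \<le> (\<Sum>i\<in>A. \<bar>\<Sum>j\<in>B. M$i$j\<bar>)" unfolding cterm_def by (rule sum_abs)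
    also have "\<dots> \<le> (\<Sum>i\<in>A. \<Sum>j\<in>B. \<bar>M$i$j\<bar>)" by (intro sum_mono sum_abs)
    also have "\<dots> \<le> (\<Sum>i\<in>A. \<Sum>j\<in>UNIV. \<bar>M$i$j\<bar>)" by (intro sum_mono sum_mono2) auto
    also have "\<dots> \<le> (\<Sum>i\<in>UNIV. \<Sum>j\<in>UNIV. \<bar>M$i$j\<bar>)" by (intro sum_mono2) (auto intro: sum_nonneg)
    finally show "cterm M A B \<le> 1 * (\<Sum>i\<in>UNIV. \<Sum>j\<in>UNIV. \<bar>M$i$j\<bar>)" by simp
  qed
  show ?thesis unfolding gnorm_def
    apply (intro conjI allI impI)
    using nn zz tri neg tr ds apply auto[6]
    using bnd by (intro exI[of _ 1]) simp
qed


definition obj :: "(real^'n^'n \<Rightarrow> real) \<Rightarrow> (bool list \<Rightarrow> bool list \<Rightarrow> real) \<Rightarrow> ('n::finite) lgraph \<Rightarrow> 'n lgraph \<Rightarrow> real^'n^'n \<Rightarrow> real" where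
  "obj N ld G H S = N (adjm G ** S - S ** adjm H) + trace_TS S (labmat ld G H)"

lemma delta_eq: "delta_T N ld G H = Inf (obj N ld G H ` {S. doubly_stochastic S})"
  unfolding delta_T_def obj_def by (rule arg_cong[where f = Inf]) auto

lemma cont_lmul: "continuous_on UNIV (\<lambda>S::real^'n::finite^'n. A ** S)"
  unfolding matrix_matrix_mult_def
  by (intro continuous_on_vec_lambda continuous_on_sum continuous_on_mult continuous_on_const
      continuous_on_component continuous_on_id)

lemma cont_rmul: "continuous_on UNIV (\<lambda>S::real^'n::finite^'n. S ** A)"
  unfolding matrix_matrix_mult_def
  by (intro continuous_on_vec_lambda continuous_on_sum continuous_on_mult continuous_on_const
      continuous_on_component continuous_on_id)

lemma cont_entry: "continuous_on UNIV (\<lambda>S::real^'n::finite^'n. S$i$j)"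
  by (intro continuous_on_component continuous_on_id)

lemma compact_ds: "compact {S::real^'n::finite^'n. doubly_stochastic S}"
proof (rule compact_eq_bounded_closed[THEN iffD2], rule conjI)
  show "bounded {S::real^'n::finite^'n. doubly_stochastic S}"
    unfolding bounded_iff
  proof (intro exI ballI)
    fix S :: "real^'n^'n" assume "S \<in> {S. doubly_stochastic S}"
    then have S: "doubly_stochastic S" by simp
    have "norm S \<le> (\<Sum>i\<in>UNIV. norm (S$i))" unfolding norm_vec_def by (rule L2_set_le_sum) simp
    also have "\<dots> \<le> (\<Sum>i\<in>UNIV. \<Sum>j\<in>UNIV. norm (S$i$j))" by (intro sum_mono) (simp add: norm_le_l1_cart)
    also have "\<dots> \<le> (\<Sum>i\<in>(UNIV::'n set). \<Sum>j\<in>(UNIV::'n set). 1)"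
      using ds_nonneg[OF S] ds_le1[OF S] by (intro sum_mono) auto
    finally show "norm S \<le> real (CARD('n) * CARD('n))" by simp
  qed
  have e: "{S::real^'n^'n. doubly_stochastic S} =
      {S. (\<forall>i. \<forall>j. 0 \<le> S$i$j) \<and> (\<forall>i. (\<Sum>j\<in>UNIV. S$i$j) = 1) \<and> (\<forall>j. (\<Sum>i\<in>UNIV. S$i$j) = 1)}"
    by (simp add: doubly_stochastic_def)
  show "closed {S::real^'n::finite^'n. doubly_stochastic S}"
    unfolding e
    by (intro closed_Collect_conj closed_Collect_all closed_Collect_le closed_Collect_eq
        continuous_on_sum cont_entry continuous_on_const)
qed

lemma cont_trace: "continuous_on UNIV (\<lambda>S::real^'n::finite^'n. trace_TS S L)"
  unfolding trace_TS_def
  by (intro continuous_on_sum continuous_on_mult cont_entry continuous_on_const)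

lemma cont_obj:
  assumes "gnorm N"
  shows "continuous_on UNIV (obj N ld G H)"
proof -
  have c1: "continuous_on UNIV (\<lambda>S. adjm G ** S - S ** adjm H)"
    by (intro continuous_on_diff cont_lmul cont_rmul)
  have "continuous_on UNIV (\<lambda>S. N (adjm G ** S - S ** adjm H))"
    by (rule continuous_on_compose2[OF gnorm_cont[OF assms] c1]) auto
  then show ?thesis unfolding obj_def[abs_def]
    by (intro continuous_on_add cont_trace)
qed

lemma attain:
  assumes "gnorm N"
  shows "\<exists>S. doubly_stochastic S \<and> delta_T N ld G H = obj N ld G H S
     \<and> (\<forall>S'. doubly_stochastic S' \<longrightarrow> obj N ld G H S \<le> obj N ld G H S')"
proof -
  have ne: "{S::real^'a^'a. doubly_stochastic S} \<noteq> {}" using ds_id by blast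
  obtain S where S: "S \<in> {S. doubly_stochastic S}"
    "\<forall>S'\<in>{S. doubly_stochastic S}. obj N ld G H S \<le> obj N ld G H S'"
    using continuous_attains_inf[OF compact_ds ne continuous_on_subset[OF cont_obj[OF assms]]]
    by blast
  have "delta_T N ld G H = obj N ld G H S"
    unfolding delta_eq by (rule cInf_eq_minimum) (use S in auto)
  then show ?thesis using S by auto
qed

lemma delta_le: "gnorm N \<Longrightarrow> doubly_stochastic S \<Longrightarrow> delta_T N ld G H \<le> obj N ld G H S"
  using attain[of N ld G H] by auto


lemma lg_sym: "G \<in> lgraphs d \<Longrightarrow> fst G u v = fst G v u"
  by (auto simp: lgraphs_def)

lemma lg_irr: "G \<in> lgraphs d \<Longrightarrow> \<not> fst G v v"
  by (auto simp: lgraphs_def)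

lemma lg_len: "G \<in> lgraphs d \<Longrightarrow> length (snd G v) = d"
  by (auto simp: lgraphs_def)

lemma adjm_nth: "adjm G $ i $ j = (if fst G i j then 1 else 0)"
  by (simp add: adjm_def)

lemma adjm_trp: "G \<in> lgraphs d \<Longrightarrow> trp (adjm G) = adjm G"
  by (simp add: vec_eq_iff adjm_nth lg_sym[of G d])

context
  fixes ld :: "bool list \<Rightarrow> bool list \<Rightarrow> real" and d :: nat
  assumes met: "metric_on {xs. length xs = d} ld"
begin

lemma ld_nn: "length x = d \<Longrightarrow> length y = d \<Longrightarrow> 0 \<le> ld x y"
  using met by (simp add: metric_on_def)
lemma ld_zero: "length x = d \<Longrightarrow> length y = d \<Longrightarrow> ld x y = 0 \<longleftrightarrow> x = y"
  using met by (simp add: metric_on_def)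
lemma ld_sym: "length x = d \<Longrightarrow> length y = d \<Longrightarrow> ld x y = ld y x"
  using met by (simp add: metric_on_def)
lemma ld_tri: "length x = d \<Longrightarrow> length y = d \<Longrightarrow> length z = d \<Longrightarrow> ld x z \<le> ld x y + ld y z"
  using met unfolding metric_on_def by blast

lemma trace_nn:
  assumes "G \<in> lgraphs d" "H \<in> lgraphs d" "doubly_stochastic S"
  shows "0 \<le> trace_TS S (labmat ld G H)"
  unfolding trace_TS_def labmat_def
  using assms by (auto intro!: sum_nonneg mult_nonneg_nonneg ds_nonneg ld_nn lg_len)

lemma obj_nn:
  assumes "gnorm N" "G \<in> lgraphs d" "H \<in> lgraphs d" "doubly_stochastic S"
  shows "0 \<le> obj N ld G H S"
  using trace_nn[OF assms(2-4)] assms(1) unfolding obj_def gnorm_def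
  by (meson add_nonneg_nonneg)

lemma delta_nn:
  assumes "gnorm N" "G \<in> lgraphs d" "H \<in> lgraphs d"
  shows "0 \<le> delta_T N ld G H"
  using attain[OF assms(1), of ld G H] obj_nn[OF assms] by auto

lemma obj_refl:
  assumes "gnorm N" "G \<in> lgraphs d"
  shows "obj N ld G G (mat 1) = 0"
proof -
  have "N (adjm G ** mat 1 - mat 1 ** adjm G) = 0" using assms(1) by (simp add: gnorm_def)
  moreover have "trace_TS (mat 1) (labmat ld G G) = 0"
  proof -
    have z: "\<And>i j. (mat 1 :: real^'a^'a)$i$j * ld (snd G i) (snd G j) = 0"
      using ld_zero[OF lg_len[OF assms(2)] lg_len[OF assms(2)]] by (simp add: mat_def)
    show ?thesis unfolding trace_TS_def labmat_def vec_lambda_beta z by simp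
  qed
  ultimately show ?thesis by (simp add: obj_def)
qed

lemma delta_refl:
  assumes "gnorm N" "G \<in> lgraphs d"
  shows "delta_T N ld G G = 0"
  using delta_le[OF assms(1) ds_id, of ld G G] obj_refl[OF assms] delta_nn[OF assms(1,2,2)] by simp

lemma obj_sym:
  assumes "gnorm N" "G \<in> lgraphs d" "H \<in> lgraphs d"
  shows "obj N ld H G (trp S) = obj N ld G H S"
proof -
  have eq: "adjm H ** trp S - trp S ** adjm G = trp (- (adjm G ** S - S ** adjm H))"
    by (simp add: trp_minus trp_uminus trp_mult adjm_trp[OF assms(2)] adjm_trp[OF assms(3)])
  have "N (adjm H ** trp S - trp S ** adjm G) = N (trp (- (adjm G ** S - S ** adjm H)))"
    by (simp only: eq)
  also have "\<dots> = N (- (adjm G ** S - S ** adjm H))" using assms(1) unfolding gnorm_def by blast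
  also have "\<dots> = N (adjm G ** S - S ** adjm H)" using assms(1) unfolding gnorm_def by blast
  finally have 1: "N (adjm H ** trp S - trp S ** adjm G) = N (adjm G ** S - S ** adjm H)" .
  have "trace_TS (trp S) (labmat ld H G) = (\<Sum>i\<in>UNIV. \<Sum>j\<in>UNIV. S$j$i * ld (snd H i) (snd G j))"
    by (simp add: trace_TS_def labmat_def)
  also have "\<dots> = (\<Sum>i\<in>UNIV. \<Sum>j\<in>UNIV. S$j$i * ld (snd G j) (snd H i))"
    using ld_sym[OF lg_len[OF assms(3)] lg_len[OF assms(2)]] by simp
  also have "\<dots> = (\<Sum>j\<in>UNIV. \<Sum>i\<in>UNIV. S$j$i * ld (snd G j) (snd H i))"
    by (rule sum.swap)
  also have "\<dots> = trace_TS S (labmat ld G H)"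
    unfolding trace_TS_def labmat_def by simp
  finally show ?thesis using 1 by (simp add: obj_def)
qed

lemma delta_sym_le:
  assumes "gnorm N" "G \<in> lgraphs d" "H \<in> lgraphs d"
  shows "delta_T N ld H G \<le> delta_T N ld G H"
proof -
  obtain S where S: "doubly_stochastic S" "delta_T N ld G H = obj N ld G H S"
    using attain[OF assms(1)] by blast
  show ?thesis using delta_le[OF assms(1) ds_trp[OF S(1)], of ld H G] obj_sym[OF assms, of S] S(2)
    by simp
qed

lemma msub_r: "(X - Y) ** (Z::real^'n::finite^'n) = X ** Z - Y ** Z"
  by (simp add: vec_eq_iff mult_nth sum_subtractf left_diff_distrib)

lemma msub_l: "(Z::real^'n::finite^'n) ** (X - Y) = Z ** X - Z ** Y"
  by (simp add: vec_eq_iff mult_nth sum_subtractf right_diff_distrib)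

lemma obj_tri:
  assumes "gnorm N" "G \<in> lgraphs d" "H \<in> lgraphs d" "K \<in> lgraphs d"
    and S1: "doubly_stochastic S1" and S2: "doubly_stochastic S2"
  shows "obj N ld G K (S1 ** S2) \<le> obj N ld G H S1 + obj N ld H K S2"
proof -
  let ?X = "adjm G ** S1 - S1 ** adjm H" and ?Y = "adjm H ** S2 - S2 ** adjm K"
  have eq: "adjm G ** (S1 ** S2) - S1 ** S2 ** adjm K = ?X ** S2 + S1 ** ?Y"
    by (simp add: msub_r msub_l matrix_mul_assoc)
  have "N (adjm G ** (S1 ** S2) - S1 ** S2 ** adjm K) \<le> N (?X ** S2) + N (S1 ** ?Y)"
    unfolding eq using assms(1) by (simp add: gnorm_def)
  also have "\<dots> \<le> N ?X + N ?Y"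
    using gnorm_left[OF assms(1) S1, of ?Y] assms(1) S2 by (simp add: gnorm_def add_mono)
  finally have n: "N (adjm G ** (S1 ** S2) - S1 ** S2 ** adjm K) \<le> N ?X + N ?Y" .
  define g where "g i = snd G i" for i
  define h where "h i = snd H i" for i
  define k where "k i = snd K i" for i
  have lg: "length (g i) = d" "length (h i) = d" "length (k i) = d" for i
    using lg_len[OF assms(2)] lg_len[OF assms(3)] lg_len[OF assms(4)] by (auto simp: g_def h_def k_def)
  have "trace_TS (S1 ** S2) (labmat ld G K) = (\<Sum>i\<in>UNIV. \<Sum>l\<in>UNIV. \<Sum>j\<in>UNIV. S1$i$j * S2$j$l * ld (g i) (k l))"
    unfolding trace_TS_def labmat_def mult_nth g_def k_def by (simp add: sum_distrib_right)
  also have "\<dots> \<le> (\<Sum>i\<in>UNIV. \<Sum>l\<in>UNIV. \<Sum>j\<in>UNIV. S1$i$j * S2$j$l * (ld (g i) (h j) + ld (h j) (k l)))"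
    by (intro sum_mono mult_left_mono ld_tri lg mult_nonneg_nonneg ds_nonneg S1 S2)
  also have "\<dots> = (\<Sum>i\<in>UNIV. \<Sum>l\<in>UNIV. \<Sum>j\<in>UNIV. S1$i$j * S2$j$l * ld (g i) (h j))
                + (\<Sum>i\<in>UNIV. \<Sum>l\<in>UNIV. \<Sum>j\<in>UNIV. S1$i$j * S2$j$l * ld (h j) (k l))"
    by (simp add: distrib_left sum.distrib)
  also have "(\<Sum>i\<in>UNIV. \<Sum>l\<in>UNIV. \<Sum>j\<in>UNIV. S1$i$j * S2$j$l * ld (g i) (h j))
      = (\<Sum>i\<in>UNIV. \<Sum>j\<in>UNIV. \<Sum>l\<in>UNIV. S1$i$j * S2$j$l * ld (g i) (h j))"
    by (rule sum.cong[OF refl], rule sum.swap)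
  also have "\<dots> = (\<Sum>i\<in>UNIV. \<Sum>j\<in>UNIV. S1$i$j * ld (g i) (h j) * (\<Sum>l\<in>UNIV. S2$j$l))"
    by (simp add: sum_distrib_left mult_ac)
  also have "\<dots> = trace_TS S1 (labmat ld G H)"
    using ds_row[OF S2] by (simp add: trace_TS_def labmat_def g_def h_def)
  also have "(\<Sum>i\<in>UNIV. \<Sum>l\<in>UNIV. \<Sum>j\<in>UNIV. S1$i$j * S2$j$l * ld (h j) (k l))
      = (\<Sum>j\<in>UNIV. \<Sum>l\<in>UNIV. S2$j$l * ld (h j) (k l) * (\<Sum>i\<in>UNIV. S1$i$j))"
  proof -
    have "(\<Sum>i\<in>UNIV. \<Sum>l\<in>UNIV. \<Sum>j\<in>UNIV. S1$i$j * S2$j$l * ld (h j) (k l))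
        = (\<Sum>l\<in>UNIV. \<Sum>i\<in>UNIV. \<Sum>j\<in>UNIV. S1$i$j * S2$j$l * ld (h j) (k l))"
      by (rule sum.swap)
    also have "\<dots> = (\<Sum>l\<in>UNIV. \<Sum>j\<in>UNIV. \<Sum>i\<in>UNIV. S1$i$j * S2$j$l * ld (h j) (k l))"
      by (rule sum.cong[OF refl], rule sum.swap)
    also have "\<dots> = (\<Sum>j\<in>UNIV. \<Sum>l\<in>UNIV. \<Sum>i\<in>UNIV. S1$i$j * S2$j$l * ld (h j) (k l))"
      by (rule sum.swap)
    also have "\<dots> = (\<Sum>j\<in>UNIV. \<Sum>l\<in>UNIV. S2$j$l * ld (h j) (k l) * (\<Sum>i\<in>UNIV. S1$i$j))"
      by (simp add: sum_distrib_left mult_ac)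
    finally show ?thesis .
  qed
  also have "\<dots> = trace_TS S2 (labmat ld H K)"
    using ds_col[OF S1] by (simp add: trace_TS_def labmat_def h_def k_def)
  finally show ?thesis using n unfolding obj_def by linarith
qed

lemma pseudo:
  fixes N :: "real^'n::finite^'n \<Rightarrow> real"
  assumes "gnorm N"
  shows "pseudo_metric_on (lgraphs d) (delta_T N ld)"
  unfolding pseudo_metric_on_def
proof (intro conjI ballI)
  fix G :: "'n lgraph" assume "G \<in> lgraphs d" then show "delta_T N ld G G = 0" by (rule delta_refl[OF assms])
next
  fix G H :: "'n lgraph" assume GH: "G \<in> lgraphs d" "H \<in> lgraphs d"
  show "0 \<le> delta_T N ld G H" by (rule delta_nn[OF assms GH])
  show "delta_T N ld G H = delta_T N ld H G"
    using delta_sym_le[OF assms GH] delta_sym_le[OF assms GH(2,1)] by simp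
next
  fix G H K :: "'n lgraph" assume GHK: "G \<in> lgraphs d" "H \<in> lgraphs d" "K \<in> lgraphs d"
  obtain S1 where S1: "doubly_stochastic S1" "delta_T N ld G H = obj N ld G H S1"
    using attain[OF assms] by blast
  obtain S2 where S2: "doubly_stochastic S2" "delta_T N ld H K = obj N ld H K S2"
    using attain[OF assms] by blast
  show "delta_T N ld G K \<le> delta_T N ld G H + delta_T N ld H K"
    using delta_le[OF assms ds_mult[OF S1(1) S2(1)], of ld G K] obj_tri[OF assms GHK S1(1) S2(1)] S1(2) S2(2)
    by linarith
qed

end


lemma cnt: "finite A \<Longrightarrow> count (image_mset f (mset_set A)) c = card {x\<in>A. f x = c}"
  by (simp add: count_image_mset Int_def sum.If_cases conj_commute)

lemma mv_nth: "(A *v x) $ i = (\<Sum>j\<in>UNIV. A$i$j * x$j)"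
  by (simp add: matrix_vector_mult_def)

lemma quad:
  fixes S :: "real^'n::finite^'n" and a b :: "real^'n"
  assumes S: "doubly_stochastic S" and ab: "a = S *v b" and ba: "b = trp S *v a"
    and nz: "S$i$j \<noteq> 0"
  shows "a$i = b$j"
proof -
  have ra: "(\<Sum>i\<in>UNIV. \<Sum>j\<in>UNIV. S$i$j * (a$i)^2) = (\<Sum>i\<in>UNIV. (a$i)^2)"
    using ds_row[OF S] by (simp add: sum_distrib_right[symmetric])
  have rb: "(\<Sum>i\<in>UNIV. \<Sum>j\<in>UNIV. S$i$j * (b$j)^2) = (\<Sum>j\<in>UNIV. (b$j)^2)"
    using ds_col[OF S] by (subst sum.swap) (simp add: sum_distrib_right[symmetric])
  have m1: "(\<Sum>i\<in>UNIV. \<Sum>j\<in>UNIV. S$i$j * (a$i * b$j)) = (\<Sum>i\<in>UNIV. (a$i)^2)"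
  proof -
    have "(\<Sum>i\<in>UNIV. \<Sum>j\<in>UNIV. S$i$j * (a$i * b$j)) = (\<Sum>i\<in>UNIV. a$i * (S *v b)$i)"
      by (simp add: mv_nth sum_distrib_left mult_ac)
    then show ?thesis using ab[symmetric] by (simp add: power2_eq_square)
  qed
  have m2: "(\<Sum>i\<in>UNIV. \<Sum>j\<in>UNIV. S$i$j * (a$i * b$j)) = (\<Sum>j\<in>UNIV. (b$j)^2)"
  proof -
    have "(\<Sum>i\<in>UNIV. \<Sum>j\<in>UNIV. S$i$j * (a$i * b$j)) = (\<Sum>j\<in>UNIV. \<Sum>i\<in>UNIV. S$i$j * (a$i * b$j))"
      by (rule sum.swap)
    also have "\<dots> = (\<Sum>j\<in>UNIV. b$j * (trp S *v a)$j)"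
      by (simp add: mv_nth sum_distrib_left mult_ac)
    finally show ?thesis using ba[symmetric] by (simp add: power2_eq_square)
  qed
  have "(\<Sum>i\<in>UNIV. \<Sum>j\<in>UNIV. S$i$j * (a$i - b$j)^2)
      = (\<Sum>i\<in>UNIV. \<Sum>j\<in>UNIV. S$i$j * (a$i)^2) - 2 * (\<Sum>i\<in>UNIV. \<Sum>j\<in>UNIV. S$i$j * (a$i * b$j))
        + (\<Sum>i\<in>UNIV. \<Sum>j\<in>UNIV. S$i$j * (b$j)^2)"
    by (simp add: power2_diff algebra_simps sum.distrib sum_subtractf sum_distrib_left)
  also have "\<dots> = 0" using ra rb m1 m2 by simp
  finally have z: "(\<Sum>i\<in>UNIV. \<Sum>j\<in>UNIV. S$i$j * (a$i - b$j)^2) = 0" .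
  have nn: "\<And>i j. 0 \<le> S$i$j * (a$i - b$j)^2" using ds_nonneg[OF S] by simp
  have "(\<Sum>j\<in>UNIV. S$i$j * (a$i - b$j)^2) = 0"
    using z by (subst (asm) sum_nonneg_eq_0_iff) (auto intro: sum_nonneg nn)
  then have "S$i$j * (a$i - b$j)^2 = 0"
    by (subst (asm) sum_nonneg_eq_0_iff) (auto intro: nn)
  then show ?thesis using nz by simp
qed


lemma card_real_UNIV: "real (card {x::'n::finite. P x}) = (\<Sum>x\<in>UNIV. if P x then 1 else 0)"
  using real_card_sum[of "UNIV::'n set" P] by simp

lemma sum_mv: "doubly_stochastic S \<Longrightarrow> (\<Sum>i\<in>UNIV. (S *v x)$i) = (\<Sum>j\<in>UNIV. x$j)"
proof -
  assume S: "doubly_stochastic S"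
  have "(\<Sum>i\<in>UNIV. (S *v x)$i) = (\<Sum>j\<in>UNIV. (\<Sum>i\<in>UNIV. S$i$j) * x$j)"
    unfolding mv_nth sum_distrib_right by (rule sum.swap)
  then show ?thesis using ds_col[OF S] by simp
qed

lemma frac_wl:
  fixes G H :: "('n::finite) lgraph"
  assumes G: "G \<in> lgraphs d" and H: "H \<in> lgraphs d" and S: "doubly_stochastic S"
    and comm: "adjm G ** S = S ** adjm H"
    and lab: "\<forall>i j. S$i$j \<noteq> 0 \<longrightarrow> snd G i = snd H j"
  shows "wl_indist G H"
proof -
  define xG where "xG t c = (\<chi> u. if wl_col G t u = c then 1 else (0::real))" for t c
  define xH where "xH t c = (\<chi> u. if wl_col H t u = c then 1 else (0::real))" for t c
  have xfacts: "xG t c = S *v xH t c \<and> xH t c = trp S *v xG t c"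
    if IH: "\<forall>i j. S$i$j \<noteq> 0 \<longrightarrow> wl_col G t i = wl_col H t j" for t c
  proof
    show "xG t c = S *v xH t c"
    proof (subst vec_eq_iff, intro allI)
      fix i
      have "(S *v xH t c)$i = (\<Sum>j\<in>UNIV. S$i$j * xG t c $ i)"
        unfolding mv_nth
      proof (rule sum.cong[OF refl])
        fix j
        show "S$i$j * xH t c $ j = S$i$j * xG t c $ i"
          using IH by (cases "S$i$j = 0") (auto simp: xG_def xH_def)
      qed
      also have "\<dots> = xG t c $ i" using ds_row[OF S] by (simp add: sum_distrib_right[symmetric])
      finally show "xG t c $ i = (S *v xH t c) $ i" by simp
    qed
    show "xH t c = trp S *v xG t c"
    proof (subst vec_eq_iff, intro allI)
      fix j
      have "(trp S *v xG t c)$j = (\<Sum>i\<in>UNIV. S$i$j * xH t c $ j)"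
        unfolding mv_nth trp_nth
      proof (rule sum.cong[OF refl])
        fix i
        show "S$i$j * xG t c $ i = S$i$j * xH t c $ j"
          using IH by (cases "S$i$j = 0") (auto simp: xG_def xH_def)
      qed
      also have "\<dots> = xH t c $ j" using ds_col[OF S] by (simp add: sum_distrib_right[symmetric])
      finally show "xH t c $ j = (trp S *v xG t c) $ j" by simp
    qed
  qed
  have trcomm: "adjm H ** trp S = trp S ** adjm G"
  proof -
    have "adjm H ** trp S = trp (S ** adjm H)" by (simp add: trp_mult adjm_trp[OF H])
    also have "\<dots> = trp (adjm G ** S)" by (simp add: comm)
    also have "\<dots> = trp S ** adjm G" by (simp add: trp_mult adjm_trp[OF G])
    finally show ?thesis .
  qed
  have adjcnt: "(adjm X *v (\<chi> u. if wl_col X t u = c then 1 else (0::real))) $ i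
      = real (count (image_mset (wl_col X t) (mset_set {u. fst X i u})) c)" for X :: "'n lgraph" and t c i
  proof -
    have "(adjm X *v (\<chi> u. if wl_col X t u = c then 1 else (0::real))) $ i
        = (\<Sum>u\<in>UNIV. if fst X i u \<and> wl_col X t u = c then 1 else 0)"
      unfolding mv_nth adjm_nth vec_lambda_beta by (rule sum.cong) auto
    also have "\<dots> = real (card {u. fst X i u \<and> wl_col X t u = c})" by (rule card_real_UNIV[symmetric])
    also have "\<dots> = real (count (image_mset (wl_col X t) (mset_set {u. fst X i u})) c)"
      by (simp add: cnt)
    finally show ?thesis .
  qed
  have col: "\<forall>i j. S$i$j \<noteq> 0 \<longrightarrow> wl_col G t i = wl_col H t j" for t
  proof (induction t)
    case 0 then show ?case using lab by simp
  next
    case (Suc t)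
    show ?case
    proof (intro allI impI)
      fix i j assume nz: "S$i$j \<noteq> 0"
      have "count (image_mset (wl_col G t) (mset_set {u. fst G i u})) c
          = count (image_mset (wl_col H t) (mset_set {u. fst H j u})) c" for c
      proof -
        note xf = xfacts[OF Suc.IH, of c]
        have ab: "adjm G *v xG t c = S *v (adjm H *v xH t c)"
          using xf comm by (metis matrix_vector_mul_assoc)
        have ba: "adjm H *v xH t c = trp S *v (adjm G *v xG t c)"
          using xf trcomm by (metis matrix_vector_mul_assoc)
        have "(adjm G *v xG t c) $ i = (adjm H *v xH t c) $ j"
          by (rule quad[OF S ab ba nz])
        then show ?thesis unfolding xG_def xH_def adjcnt by simp
      qed
      then have "image_mset (wl_col G t) (mset_set {u. fst G i u})
          = image_mset (wl_col H t) (mset_set {u. fst H j u})" by (simp add: multiset_eq_iff)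
      then show "wl_col G (Suc t) i = wl_col H (Suc t) j" using Suc.IH nz by simp
    qed
  qed
  show ?thesis unfolding wl_indist_def
  proof (intro allI, subst multiset_eq_iff, intro allI)
    fix t c
    note xf = xfacts[OF col[of t], of c]
    have "real (count (image_mset (wl_col G t) (mset_set UNIV)) c) = (\<Sum>i\<in>UNIV. xG t c $ i)"
      by (simp add: cnt card_real_UNIV xG_def)
    also have "\<dots> = (\<Sum>j\<in>UNIV. xH t c $ j)" using xf sum_mv[OF S] by metis
    also have "\<dots> = real (count (image_mset (wl_col H t) (mset_set UNIV)) c)"
      by (simp add: cnt card_real_UNIV xH_def)
    finally show "count (image_mset (wl_col G t) (mset_set UNIV)) c = count (image_mset (wl_col H t) (mset_set UNIV)) c"
      by linarith
  qed
qed


lemma wl_lab: "wl_col X t x = wl_col Y t y \<Longrightarrow> snd X x = snd Y y"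
  by (induction t arbitrary: x y) auto

definition degR :: "('n::finite) lgraph \<Rightarrow> nat \<Rightarrow> 'n \<Rightarrow> wlcol \<Rightarrow> real" where
  "degR X t x c = (\<Sum>u\<in>UNIV. if fst X x u \<and> wl_col X t u = c then 1 else 0)"

lemma degR_count: "degR X t x c = real (count (image_mset (wl_col X t) (mset_set {u. fst X x u})) c)"
proof -
  have "degR X t x c = real (card {u. fst X x u \<and> wl_col X t u = c})"
    unfolding degR_def by (rule card_real_UNIV[symmetric])
  also have "\<dots> = real (count (image_mset (wl_col X t) (mset_set {u. fst X x u})) c)"
    by (simp add: cnt)
  finally show ?thesis .
qed

lemma step_deg: "wl_col X (Suc t) x = wl_col Y (Suc t) y \<Longrightarrow> degR X t x c = degR Y t y c"
  unfolding degR_count by simp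

definition phi :: "wlcol \<Rightarrow> wlcol" where
  "phi w = (case w of Step c m \<Rightarrow> c | Base l \<Rightarrow> Base l)"

lemma wl_stable:
  fixes G H :: "('n::finite) lgraph"
  shows "\<exists>T. (\<forall>x y. wl_col H T x = wl_col G T y \<longrightarrow> wl_col H (Suc T) x = wl_col G (Suc T) y)
          \<and> (\<forall>x y. wl_col H T x = wl_col H T y \<longrightarrow> wl_col H (Suc T) x = wl_col H (Suc T) y)"
proof -
  define col where "col t p = wl_col (if fst p then G else H) t (snd p)" for t and p :: "bool \<times> 'n"
  define R where "R t = range (col t)" for t
  have phicol: "phi (col (Suc t) p) = col t p" for t p
    by (simp add: col_def phi_def)
  have Rphi: "R t = phi ` R (Suc t)" for t
    unfolding R_def image_image phicol by simp
  have mono: "card (R t) \<le> card (R (Suc t))" for t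
    unfolding Rphi[of t] by (rule card_image_le) (simp add: R_def)
  have bnd: "card (R t) \<le> CARD(bool \<times> 'n)" for t
    unfolding R_def by (rule card_image_le) simp
  have "\<exists>T. card (R (Suc T)) \<le> card (R T)"
  proof (rule ccontr)
    assume "\<not> ?thesis"
    then have lt: "\<And>T. card (R T) < card (R (Suc T))" by (simp add: not_le)
    have "t \<le> card (R t)" for t
    proof (induction t)
      case 0 then show ?case by simp
    next
      case (Suc t) then show ?case using lt[of t] by simp
    qed
    then have "Suc CARD(bool \<times> 'n) \<le> card (R (Suc CARD(bool \<times> 'n)))" .
    then show False using bnd[of "Suc CARD(bool \<times> 'n)"] by linarith
  qed
  then obtain T where T: "card (R (Suc T)) \<le> card (R T)" by blast
  have fin: "finite (R (Suc T))" by (simp add: R_def)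
  have "card (phi ` R (Suc T)) = card (R (Suc T))"
    using T mono[of T] unfolding Rphi[of T] by simp
  then have inj: "inj_on phi (R (Suc T))" using fin by (simp add: inj_on_iff_eq_card)
  have st: "col T p = col T q \<Longrightarrow> col (Suc T) p = col (Suc T) q" for p q
  proof -
    assume "col T p = col T q"
    then have "phi (col (Suc T) p) = phi (col (Suc T) q)" by (simp add: phicol)
    moreover have "col (Suc T) p \<in> R (Suc T)" "col (Suc T) q \<in> R (Suc T)" by (auto simp: R_def)
    ultimately show ?thesis using inj by (meson inj_onD)
  qed
  show ?thesis
  proof (intro exI conjI allI impI)
    fix x y
    assume "wl_col H T x = wl_col G T y"
    then show "wl_col H (Suc T) x = wl_col G (Suc T) y"
      using st[of "(False, x)" "(True, y)"] by (simp add: col_def)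
  next
    fix x y
    assume "wl_col H T x = wl_col H T y"
    then show "wl_col H (Suc T) x = wl_col H (Suc T) y"
      using st[of "(False, x)" "(False, y)"] by (simp add: col_def)
  qed
qed


lemma wl_frac:
  fixes G H :: "('n::finite) lgraph"
  assumes G: "G \<in> lgraphs d" and H: "H \<in> lgraphs d" and wl: "wl_indist G H"
  shows "\<exists>S. doubly_stochastic S \<and> adjm G ** S = S ** adjm H \<and> (\<forall>i j. S$i$j \<noteq> 0 \<longrightarrow> snd G i = snd H j)"
proof -
  obtain T where stHG: "\<And>x y. wl_col H T x = wl_col G T y \<Longrightarrow> wl_col H (Suc T) x = wl_col G (Suc T) y"
    and stHH: "\<And>x y. wl_col H T x = wl_col H T y \<Longrightarrow> wl_col H (Suc T) x = wl_col H (Suc T) y"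
    using wl_stable[of H G] by blast
  define cG where "cG = wl_col G T"
  define cH where "cH = wl_col H T"
  define mG where "mG c = (\<Sum>x\<in>UNIV. if cG x = c then 1 else (0::real))" for c
  define mH where "mH c = (\<Sum>x\<in>UNIV. if cH x = c then 1 else (0::real))" for c
  have mGH: "mG c = mH c" for c
  proof -
    have "count (image_mset cG (mset_set UNIV)) c = count (image_mset cH (mset_set UNIV)) c"
      using wl unfolding wl_indist_def cG_def cH_def by metis
    then have "real (card {x. cG x = c}) = real (card {x. cH x = c})" by (simp add: cnt)
    then show ?thesis unfolding mG_def mH_def card_real_UNIV .
  qed
  have mH_ge: "1 \<le> mH (cH j)" for j
  proof -
    have "(if cH j = cH j then 1 else (0::real)) \<le> mH (cH j)"
      unfolding mH_def by (rule member_le_sum) auto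
    then show ?thesis by simp
  qed
  have mH_geG: "1 \<le> mH (cG i)" for i
  proof -
    have "(if cG i = cG i then 1 else (0::real)) \<le> mG (cG i)"
      unfolding mG_def by (rule member_le_sum) auto
    then show ?thesis using mGH by simp
  qed
  define S where "S = (\<chi> i j. if cG i = cH j then 1 / mH (cH j) else (0::real))"
  have Sn: "S$i$j = (if cG i = cH j then 1 / mH (cH j) else 0)" for i j by (simp add: S_def)
  have ds: "doubly_stochastic S"
    unfolding doubly_stochastic_def
  proof (intro conjI allI)
    fix i j show "0 \<le> S$i$j" using mH_ge[of j] by (simp add: Sn)
  next
    fix i
    have "(\<Sum>j\<in>UNIV. S$i$j) = (\<Sum>j\<in>UNIV. (if cH j = cG i then 1 else 0) * (1 / mH (cG i)))"
      by (rule sum.cong) (auto simp: Sn)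
    also have "\<dots> = mH (cG i) * (1 / mH (cG i))" by (simp only: sum_distrib_right[symmetric] mH_def)
    also have "\<dots> = 1" using mH_geG[of i] by simp
    finally show "(\<Sum>j\<in>UNIV. S$i$j) = 1" .
  next
    fix j
    have "(\<Sum>i\<in>UNIV. S$i$j) = (\<Sum>i\<in>UNIV. (if cG i = cH j then 1 else 0) * (1 / mH (cH j)))"
      by (rule sum.cong) (auto simp: Sn)
    also have "\<dots> = mG (cH j) * (1 / mH (cH j))" by (simp only: sum_distrib_right[symmetric] mG_def)
    also have "\<dots> = 1" using mH_ge[of j] mGH by simp
    finally show "(\<Sum>i\<in>UNIV. S$i$j) = 1" .
  qed
  have symH: "fst H u v = fst H v u" for u v using lg_sym[OF H] .
  have dc: "(\<Sum>x\<in>UNIV. (if cH x = c then 1 else 0) * degR H T x c')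
      = (\<Sum>u\<in>UNIV. (if cH u = c' then 1 else 0) * degR H T u c)" for c c'
  proof -
    have "(\<Sum>x\<in>UNIV. (if cH x = c then 1 else 0) * degR H T x c')
        = (\<Sum>x\<in>UNIV. \<Sum>u\<in>UNIV. if cH x = c \<and> fst H x u \<and> cH u = c' then 1 else (0::real))"
      unfolding degR_def cH_def sum_distrib_left by (intro sum.cong refl) auto
    also have "\<dots> = (\<Sum>u\<in>UNIV. \<Sum>x\<in>UNIV. if cH x = c \<and> fst H x u \<and> cH u = c' then 1 else (0::real))"
      by (rule sum.swap)
    also have "\<dots> = (\<Sum>u\<in>UNIV. (if cH u = c' then 1 else 0) * degR H T u c)"
      unfolding degR_def cH_def sum_distrib_left by (intro sum.cong refl) (auto simp: symH)
    finally show ?thesis .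
  qed
  have comm: "adjm G ** S = S ** adjm H"
  proof (subst vec_eq_iff, intro allI, subst vec_eq_iff, intro allI)
    fix i j
    define c where "c = cG i"
    define c' where "c' = cH j"
    have l: "(adjm G ** S)$i$j = degR G T i c' * (1 / mH c')"
      unfolding mult_nth degR_def sum_distrib_right
      by (rule sum.cong) (auto simp: adjm_nth Sn c'_def cG_def)
    have r: "(S ** adjm H)$i$j = degR H T j c * (1 / mH c)"
      unfolding mult_nth degR_def sum_distrib_right
      by (rule sum.cong) (auto simp: adjm_nth Sn c_def cH_def cG_def symH)
    have lhs: "(\<Sum>x\<in>UNIV. (if cH x = c then 1 else 0) * degR H T x c') = mH c * degR G T i c'"
    proof -
      have "(\<Sum>x\<in>UNIV. (if cH x = c then 1 else 0) * degR H T x c')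
          = (\<Sum>x\<in>UNIV. (if cH x = c then 1 else 0) * degR G T i c')"
      proof (rule sum.cong[OF refl])
        fix x
        show "(if cH x = c then 1 else 0) * degR H T x c' = (if cH x = c then 1 else 0) * degR G T i c'"
          using step_deg[OF stHG[of x i]] by (auto simp: c_def cH_def cG_def)
      qed
      then show ?thesis by (simp only: sum_distrib_right[symmetric] mH_def)
    qed
    have rhs: "(\<Sum>u\<in>UNIV. (if cH u = c' then 1 else 0) * degR H T u c) = mH c' * degR H T j c"
    proof -
      have "(\<Sum>u\<in>UNIV. (if cH u = c' then 1 else 0) * degR H T u c)
          = (\<Sum>u\<in>UNIV. (if cH u = c' then 1 else 0) * degR H T j c)"
      proof (rule sum.cong[OF refl])
        fix u
        show "(if cH u = c' then 1 else 0) * degR H T u c = (if cH u = c' then 1 else 0) * degR H T j c"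
          using step_deg[OF stHH[of u j]] by (auto simp: c'_def cH_def)
      qed
      then show ?thesis by (simp only: sum_distrib_right[symmetric] mH_def)
    qed
    have key: "mH c * degR G T i c' = mH c' * degR H T j c" using dc[of c c'] lhs rhs by simp
    have p1: "mH c > 0" using mH_geG[of i] by (simp add: c_def)
    have p2: "mH c' > 0" using mH_ge[of j] by (simp add: c'_def)
    have "degR G T i c' * (1 / mH c') = degR H T j c * (1 / mH c)"
      using key p1 p2 by (simp add: field_simps)
    then show "(adjm G ** S)$i$j = (S ** adjm H)$i$j" using l r by simp
  qed
  have lab: "\<forall>i j. S$i$j \<noteq> 0 \<longrightarrow> snd G i = snd H j"
    by (auto simp: Sn cG_def cH_def intro: wl_lab split: if_splits)
  show ?thesis using ds comm lab by blast
qed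


theorem mainTheorem2:
  fixes N :: "real^('n::finite)^'n \<Rightarrow> real"
    and ldist :: "bool list \<Rightarrow> bool list \<Rightarrow> real"
    and d :: nat
  assumes "metric_on {xs. length xs = d} ldist"
    and "entrywise_matrix_norm N \<or> N = cut_norm"
  shows "pseudo_metric_on (lgraphs d) (delta_T N ldist)
     \<and> (\<forall>G\<in>lgraphs d. \<forall>H\<in>lgraphs d. delta_T N ldist G H = 0 \<longleftrightarrow> wl_indist G H)"
proof -
  note met = assms(1)
  have gn: "gnorm N" using assms(2) entrywise_gnorm cut_gnorm by auto
  have ps: "pseudo_metric_on (lgraphs d) (delta_T N ldist)" by (rule pseudo[OF met gn])
  have iff: "delta_T N ldist G H = 0 \<longleftrightarrow> wl_indist G H" if G: "G \<in> lgraphs d" and H: "H \<in> lgraphs d" for G H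
  proof
    assume z: "delta_T N ldist G H = 0"
    obtain S where S: "doubly_stochastic S" "delta_T N ldist G H = obj N ldist G H S"
      using attain[OF gn] by blast
    have t0: "0 \<le> trace_TS S (labmat ldist G H)" by (rule trace_nn[OF met G H S(1)])
    have n0: "0 \<le> N (adjm G ** S - S ** adjm H)" using gn by (simp add: gnorm_def)
    have sum0: "N (adjm G ** S - S ** adjm H) + trace_TS S (labmat ldist G H) = 0"
      using z S(2) by (simp add: obj_def)
    have "N (adjm G ** S - S ** adjm H) = 0" using t0 n0 sum0 by linarith
    then have comm: "adjm G ** S = S ** adjm H" using gn by (simp add: gnorm_def)
    have tz: "trace_TS S (labmat ldist G H) = 0" using t0 n0 sum0 by linarith
    have tnn: "\<And>i j. 0 \<le> S$i$j * ldist (snd G i) (snd H j)"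
      using ds_nonneg[OF S(1)] ld_nn[OF met lg_len[OF G] lg_len[OF H]] by simp
    have lab: "\<forall>i j. S$i$j \<noteq> 0 \<longrightarrow> snd G i = snd H j"
    proof (intro allI impI)
      fix i j assume nz: "S$i$j \<noteq> 0"
      have "(\<Sum>j\<in>UNIV. S$i$j * ldist (snd G i) (snd H j)) = 0"
        using tz unfolding trace_TS_def labmat_def vec_lambda_beta
        by (subst (asm) sum_nonneg_eq_0_iff) (auto intro: sum_nonneg tnn)
      then have "S$i$j * ldist (snd G i) (snd H j) = 0"
        by (subst (asm) sum_nonneg_eq_0_iff) (auto intro: tnn)
      then have "ldist (snd G i) (snd H j) = 0" using nz by simp
      then show "snd G i = snd H j" using ld_zero[OF met lg_len[OF G] lg_len[OF H]] by blast
    qed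
    show "wl_indist G H" by (rule frac_wl[OF G H S(1) comm lab])
  next
    assume "wl_indist G H"
    then obtain S where S: "doubly_stochastic S" "adjm G ** S = S ** adjm H"
      "\<forall>i j. S$i$j \<noteq> 0 \<longrightarrow> snd G i = snd H j"
      using wl_frac[OF G H] by blast
    have zz: "\<And>i j. S$i$j * ldist (snd G i) (snd H j) = 0"
    proof -
      fix i j
      show "S$i$j * ldist (snd G i) (snd H j) = 0"
      proof (cases "S$i$j = 0")
        case False
        then have "snd G i = snd H j" using S(3) by blast
        then show ?thesis using ld_zero[OF met lg_len[OF G] lg_len[OF H], of i j] by simp
      qed simp
    qed
    have "trace_TS S (labmat ldist G H) = 0"
      unfolding trace_TS_def labmat_def vec_lambda_beta zz by simp
    moreover have "N (adjm G ** S - S ** adjm H) = 0" using S(2) gn by (simp add: gnorm_def)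
    ultimately have "obj N ldist G H S = 0" by (simp add: obj_def)
    then show "delta_T N ldist G H = 0"
      using delta_le[OF gn S(1), of ldist G H] delta_nn[OF met gn G H] by simp
  qed
  show ?thesis using ps iff by blast
qed


end
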